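(* Let $\mu>0$, $L>0$, let $g:\mathbb{R}^n\to\mathbb{R}$ be $\mu$-strongly convex and $(L+\mu)$-smooth, let $h$ be proper closed convex, $\psi=g+h$, and run the ACG method (see context) from $x_0\in\mathbb{R}^n$. Then for every $j\ge0$, $$A_j\psi(y_j)\le\min_{u\in\mathbb{R}^n}\left\{A_j\Gamma_j(u)+\tfrac12\|u-x_0\|^2\right\}.$$
   Context: $\ell_g(u;x)=g(x)+\langle\nabla g(x),u-x\rangle$. ACG method: $A_0=0$, $\tau_0=1/L$, $y_0=x_0$; for $j\ge0$: $a_j=\frac{\tau_j+\sqrt{\tau_j^2+4\tau_jA_j}}{2}$, $\tau_{j+1}=\tau_j+\mu a_j/L$, $A_{j+1}=A_j+a_j$, $\tilde x_j=\frac{A_j}{A_{j+1}}y_j+\frac{a_j}{A_{j+1}}x_j$; $\tilde y_{j+1}=\mathrm{argmin}_u\{\ell_g(u;\tilde x_j)+h(u)+\frac{L+\mu}{2}\|u-\tilde x_j\|^2\}$; $y_{j+1}\in\mathrm{Argmin}\{\psi(u):u\in\{y_j,\tilde y_{j+1}\}\}$; $x_{j+1}=\frac{(L+\mu)a_j\tilde y_{j+1}-\frac{A_ja_jL}{A_{j+1}}y_j}{A_{j+1}\mu+1}$. Define $\tilde\gamma_j(u)=\ell_g(u;\tilde x_j)+h(u)+\frac\mu2\|u-\tilde x_j\|^2$, $\gamma_j(u)=\tilde\gamma_j(\tilde y_{j+1})+L\langle\tilde x_j-\tilde y_{j+1},u-\tilde y_{j+1}\rangle+\frac\mu2\|u-\tilde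 y_{j+1}\|^2$, $\Gamma_0\equiv0$, $\Gamma_{j+1}=(A_j\Gamma_j+a_j\gamma_j)/A_{j+1}$. The case $j=0$ reads $0\le\min_u\frac12\|u-x_0\|^2$. *)

theory Defs
  imports "HOL-Analysis.Analysis"
begin

definition strongly_convex :: "real \<Rightarrow> ('a::real_inner \<Rightarrow> real) \<Rightarrow> bool" where
  "strongly_convex m g \<longleftrightarrow> convex_on UNIV (\<lambda>x. g x - m / 2 * (norm x)\<^sup>2)"

definition smooth_with_grad :: "real \<Rightarrow> ('a::real_inner \<Rightarrow> real) \<Rightarrow> ('a \<Rightarrow> 'a) \<Rightarrow> bool" where
  "smooth_with_grad M g G \<longleftrightarrow>
     (\<forall>x. (g has_derivative (\<lambda>v. G x \<bullet> v)) (at x)) \<and>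
     (\<forall>x y. norm (G x - G y) \<le> M * norm (x - y))"

definition proper_closed_convex :: "('a::euclidean_space \<Rightarrow> ereal) \<Rightarrow> bool" where
  "proper_closed_convex h \<longleftrightarrow>
     (\<forall>x. h x \<noteq> -\<infinity>) \<and> (\<exists>x. h x \<noteq> \<infinity>) \<and>
     convex {(x, r::real). h x \<le> ereal r} \<and> closed {(x, r::real). h x \<le> ereal r}"

definition lin :: "('a::real_inner \<Rightarrow> real) \<Rightarrow> ('a \<Rightarrow> 'a) \<Rightarrow> 'a \<Rightarrow> 'a \<Rightarrow> real" where
  "lin g G u x = g x + G x \<bullet> (u - x)"

end

theory Submission imports Defs begin

lemma gline:
  fixes g :: "'a::real_inner \<Rightarrow> real"
  assumes "\<forall>x. (g has_derivative (\<lambda>v. G x \<bullet> v)) (at x)"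
  shows "((\<lambda>t. g (x + t *\<^sub>R d)) has_real_derivative (G (x + t *\<^sub>R d) \<bullet> d)) (at t)"
proof -
  have 1: "((\<lambda>t. x + t *\<^sub>R d) has_derivative (\<lambda>s. s *\<^sub>R d)) (at t)"
    by (auto intro!: derivative_eq_intros)
  have 2: "(g has_derivative (\<lambda>v. G (x + t *\<^sub>R d) \<bullet> v)) (at (x + t *\<^sub>R d))" using assms by blast
  have "((g \<circ> (\<lambda>t. x + t *\<^sub>R d)) has_derivative ((\<lambda>v. G (x + t *\<^sub>R d) \<bullet> v) \<circ> (\<lambda>s. s *\<^sub>R d))) (at t)"
    by (rule diff_chain_at[OF 1 2])
  moreover have "(\<lambda>s. s * (G (x + t *\<^sub>R d) \<bullet> d)) = (*) (G (x + t *\<^sub>R d) \<bullet> d)"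
    by (auto simp: fun_eq_iff)
  ultimately show ?thesis
    by (simp add: has_field_derivative_def o_def)
qed

lemma sc_tangent:
  fixes g :: "'a::real_inner \<Rightarrow> real"
  assumes sc: "strongly_convex \<mu> g" and dg: "\<forall>x. (g has_derivative (\<lambda>v. G x \<bullet> v)) (at x)"
  shows "g x + G x \<bullet> (u - x) + \<mu>/2 * (norm (u - x))\<^sup>2 \<le> g u"
proof -
  define d where "d = u - x"
  define F where "F = (\<lambda>z. g z - \<mu> / 2 * (norm z)\<^sup>2)"
  have cF: "convex_on UNIV F" using sc unfolding strongly_convex_def F_def by simp
  define \<phi> where "\<phi> = (\<lambda>t::real. g (x + t *\<^sub>R d) - \<mu>/2 * ((norm x)\<^sup>2 + 2*t*(x \<bullet> d) + t\<^sup>2 * (norm d)\<^sup>2))"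
  have nn: "(norm (x + t *\<^sub>R d))\<^sup>2 = (norm x)\<^sup>2 + 2*t*(x \<bullet> d) + t\<^sup>2 * (norm d)\<^sup>2" for t
    unfolding power2_norm_eq_inner by (simp add: inner_add_left inner_add_right inner_commute algebra_simps power2_eq_square)
  have phiF: "\<phi> t = F (x + t *\<^sub>R d)" for t
    using nn[of t] \<phi>_def F_def by simp
  have cphi: "convex_on UNIV \<phi>"
  proof (rule convex_onI)
    fix t a b :: real assume t: "0 < t" "t < 1"
    have "x + ((1 - t) *\<^sub>R a + t *\<^sub>R b) *\<^sub>R d = (1 - t) *\<^sub>R (x + a *\<^sub>R d) + t *\<^sub>R (x + b *\<^sub>R d)"
      by (simp add: algebra_simps)
    then show "\<phi> ((1 - t) *\<^sub>R a + t *\<^sub>R b) \<le> (1 - t) * \<phi> a + t * \<phi> b"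
      using convex_onD[OF cF, of t "x + a *\<^sub>R d" "x + b *\<^sub>R d"] t by (simp add: phiF)
  qed simp
  have der: "(\<phi> has_field_derivative (G x \<bullet> d - \<mu> * (x \<bullet> d))) (at 0 within UNIV)"
    unfolding \<phi>_def
    using gline[OF dg, of x d 0]
    by (auto intro!: derivative_eq_intros)
  have "\<phi> 1 - \<phi> 0 \<ge> (G x \<bullet> d - \<mu> * (x \<bullet> d)) * (1 - 0)"
    by (rule convex_on_imp_above_tangent[OF cphi]) (use der in auto)
  then show ?thesis
    unfolding \<phi>_def d_def
    by (simp add: power2_norm_eq_inner inner_diff_left inner_diff_right inner_commute algebra_simps)
qed

lemma descent:
  fixes g :: "'a::real_inner \<Rightarrow> real"
  assumes sm: "smooth_with_grad M g G" and M: "M \<ge> 0"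
  shows "g u \<le> g x + G x \<bullet> (u - x) + M/2 * (norm (u - x))\<^sup>2"
proof -
  define d where "d = u - x"
  have dg: "\<forall>x. (g has_derivative (\<lambda>v. G x \<bullet> v)) (at x)" and lip: "\<And>x y. norm (G x - G y) \<le> M * norm (x - y)"
    using sm unfolding smooth_with_grad_def by auto
  define \<phi> where "\<phi> = (\<lambda>t::real. g (x + t *\<^sub>R d) - t * (G x \<bullet> d) - M/2 * t\<^sup>2 * (norm d)\<^sup>2)"
  have "\<phi> 0 \<ge> \<phi> 1"
  proof (rule DERIV_nonpos_imp_nonincreasing[of 0 1 \<phi>])
    show "0 \<le> (1::real)" by simp
  next
    fix t :: real assume t: "0 \<le> t" "t \<le> 1"
    have D: "(\<phi> has_real_derivative (G (x + t *\<^sub>R d) \<bullet> d - G x \<bullet> d - M * t * (norm d)\<^sup>2)) (at t)"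
      unfolding \<phi>_def using gline[OF dg, of x d t]
      by (auto intro!: derivative_eq_intros simp: power2_eq_square)
    have "(G (x + t *\<^sub>R d) - G x) \<bullet> d \<le> norm (G (x + t *\<^sub>R d) - G x) * norm d"
      by (rule norm_cauchy_schwarz)
    also have "\<dots> \<le> M * norm (t *\<^sub>R d) * norm d"
      using lip[of "x + t *\<^sub>R d" x] by (simp add: mult_right_mono)
    also have "\<dots> = M * t * (norm d)\<^sup>2" using t by (simp add: power2_eq_square)
    finally have "G (x + t *\<^sub>R d) \<bullet> d - G x \<bullet> d - M * t * (norm d)\<^sup>2 \<le> 0"
      by (simp add: inner_diff_left)
    then show "\<exists>y. (\<phi> has_real_derivative y) (at t) \<and> y \<le> 0" using D by blast
  qed
  then show ?thesis unfolding \<phi>_def d_def by simp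
qed


lemma nsq: "(norm (a + b :: 'a::real_inner))\<^sup>2 = (norm a)\<^sup>2 + 2 * (a \<bullet> b) + (norm b)\<^sup>2"
  unfolding power2_norm_eq_inner by (simp add: inner_add_left inner_add_right inner_commute)

lemma hconv:
  assumes "proper_closed_convex h" "h p = ereal rp" "h q = ereal rq" "0 \<le> t" "t \<le> 1"
  shows "h ((1 - t) *\<^sub>R p + t *\<^sub>R q) \<le> ereal ((1 - t) * rp + t * rq)"
proof -
  let ?E = "{(x, r::real). h x \<le> ereal r}"
  have c: "convex ?E" using assms(1) unfolding proper_closed_convex_def by blast
  have "(1 - t) *\<^sub>R (p, rp) + t *\<^sub>R (q, rq) \<in> ?E"
    by (rule convexD[OF c]) (use assms in auto)
  then show ?thesis by simp
qed

lemma small_t: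
  fixes c K :: real
  assumes "\<And>t. 0 < t \<Longrightarrow> t \<le> 1 \<Longrightarrow> 0 \<le> c + t * K" "K \<ge> 0"
  shows "0 \<le> c"
proof (rule ccontr)
  assume "\<not> 0 \<le> c"
  then have c: "c < 0" by simp
  define t where "t = min 1 (- c / (K + 1))"
  have p: "- c / (K + 1) > 0" using c assms(2) by (intro divide_pos_pos) auto
  have t0: "0 < t" "t \<le> 1" using p by (auto simp: t_def)
  have "t * K \<le> (- c / (K + 1)) * K" using t0 assms(2) by (intro mult_right_mono) (auto simp: t_def)
  also have "\<dots> < - c" using c assms(2) by (simp add: field_simps)
  finally show False using assms(1)[OF t0] by simp
qed

lemma h_fin:
  assumes "proper_closed_convex h"
    and "\<And>u. ereal a + h yt + ereal b \<le> ereal (f u) + h u + ereal (k u)"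
  shows "\<exists>hy. h yt = ereal hy"
proof -
  obtain u0 where u0: "h u0 \<noteq> \<infinity>" "h u0 \<noteq> -\<infinity>" using assms(1) unfolding proper_closed_convex_def by blast
  have n: "h yt \<noteq> -\<infinity>" using assms(1) unfolding proper_closed_convex_def by blast
  have "ereal a + h yt + ereal b \<le> ereal (f u0) + h u0 + ereal (k u0)" by (rule assms(2))
  moreover have "ereal (f u0) + h u0 + ereal (k u0) \<noteq> \<infinity>" using u0 by (cases "h u0") auto
  ultimately have "h yt \<noteq> \<infinity>" by auto
  with n show ?thesis by (cases "h yt") auto
qed

lemma model_below:
  fixes g :: "'a::euclidean_space \<Rightarrow> real"
  assumes sc: "strongly_convex \<mu> g" and dg: "\<forall>x. (g has_derivative (\<lambda>v. G x \<bullet> v)) (at x)"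
    and hp: "proper_closed_convex h" and mu: "\<mu> > 0" and L: "L > 0"
    and ymin: "\<And>u. ereal (lin g G yt xt) + h yt + ereal ((L + \<mu>) / 2 * (norm (yt - xt))\<^sup>2)
                  \<le> ereal (lin g G u xt) + h u + ereal ((L + \<mu>) / 2 * (norm (u - xt))\<^sup>2)"
    and hyt: "h yt = ereal hy"
  shows "ereal (lin g G yt xt + hy + \<mu> / 2 * (norm (yt - xt))\<^sup>2 + L * ((xt - yt) \<bullet> (u - yt))
            + \<mu> / 2 * (norm (u - yt))\<^sup>2) \<le> ereal (g u) + h u"
proof (cases "h u")
  case PInf then show ?thesis by simp
next
  case MInf then show ?thesis using hp unfolding proper_closed_convex_def by blast
next
  case (real hu)
  define e where "e = u - yt"
  define w where "w = yt - xt"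
  have ue: "u = yt + e" and xw: "xt = yt - w" unfolding e_def w_def by auto
  define c where "c = G xt \<bullet> e + hu - hy + (L + \<mu>) * (w \<bullet> e)"
  have "0 \<le> c"
  proof (rule small_t)
    fix t :: real assume t: "0 < t" "t \<le> 1"
    define v where "v = (1 - t) *\<^sub>R yt + t *\<^sub>R u"
    have hv: "h v \<le> ereal ((1 - t) * hy + t * hu)"
      unfolding v_def using hconv[OF hp hyt real] t by simp
    have "ereal (lin g G yt xt) + h yt + ereal ((L + \<mu>) / 2 * (norm (yt - xt))\<^sup>2)
          \<le> ereal (lin g G v xt) + h v + ereal ((L + \<mu>) / 2 * (norm (v - xt))\<^sup>2)" by (rule ymin)
    also have "\<dots> \<le> ereal (lin g G v xt) + ereal ((1 - t) * hy + t * hu) + ereal ((L + \<mu>) / 2 * (norm (v - xt))\<^sup>2)"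
      using hv by (intro add_mono) auto
    finally have R: "lin g G yt xt + hy + (L + \<mu>) / 2 * (norm (yt - xt))\<^sup>2
        \<le> lin g G v xt + ((1 - t) * hy + t * hu) + (L + \<mu>) / 2 * (norm (v - xt))\<^sup>2"
      using hyt by simp
    have vx: "v - xt = w + t *\<^sub>R e" unfolding v_def e_def w_def by (simp add: algebra_simps)
    have n1: "(norm (v - xt))\<^sup>2 = (norm w)\<^sup>2 + 2 * t * (w \<bullet> e) + t\<^sup>2 * (norm e)\<^sup>2"
      unfolding vx nsq by (simp add: power2_eq_square)
    have l1: "lin g G v xt = g xt + G xt \<bullet> w + t * (G xt \<bullet> e)"
      unfolding lin_def vx by (simp add: inner_add_right)
    have l2: "lin g G yt xt = g xt + G xt \<bullet> w"
      unfolding lin_def w_def by simp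
    have "0 \<le> t * (c + t * ((L + \<mu>) / 2 * (norm e)\<^sup>2))"
      using R unfolding n1 l1 l2 c_def w_def[symmetric] by (simp add: algebra_simps power2_eq_square add_divide_distrib)
    then show "0 \<le> c + t * ((L + \<mu>) / 2 * (norm e)\<^sup>2)" using t by (simp add: zero_le_mult_iff)
  next
    show "0 \<le> (L + \<mu>) / 2 * (norm e)\<^sup>2" using L mu by simp
  qed
  have T: "g xt + G xt \<bullet> (u - xt) + \<mu>/2 * (norm (u - xt))\<^sup>2 \<le> g u" by (rule sc_tangent[OF sc dg])
  have ux: "u - xt = e + w" unfolding e_def w_def by simp
  have l2: "lin g G yt xt = g xt + G xt \<bullet> w"
    unfolding lin_def w_def by simp
  have xy: "xt - yt = - w" unfolding w_def by simp
  have "lin g G yt xt + hy + \<mu> / 2 * (norm (yt - xt))\<^sup>2 + L * ((xt - yt) \<bullet> (u - yt))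
            + \<mu> / 2 * (norm (u - yt))\<^sup>2 \<le> g u + hu"
    using T \<open>0 \<le> c\<close> unfolding ux nsq l2 xy c_def e_def[symmetric] w_def[symmetric]
    by (simp add: inner_add_right inner_commute algebra_simps)
  then show ?thesis using real by simp
qed


lemma nsq_diff: "(norm (a - b :: 'a::real_inner))\<^sup>2 = (norm a)\<^sup>2 - 2 * (a \<bullet> b) + (norm b)\<^sup>2"
  unfolding power2_norm_eq_inner by (simp add: inner_diff_left inner_diff_right inner_commute)

lemma nsq_scale: "(norm (s *\<^sub>R a :: 'a::real_inner))\<^sup>2 = s\<^sup>2 * (norm a)\<^sup>2"
  by (simp add: power_mult_distrib)

lemma sq_convex:
  fixes p r :: "'a::real_inner"
  assumes "s \<ge> 0" "t \<ge> 0" "s + t = 1"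
  shows "(norm (s *\<^sub>R p + t *\<^sub>R r))\<^sup>2 \<le> s * (norm p)\<^sup>2 + t * (norm r)\<^sup>2"
proof -
  have e: "(norm (s *\<^sub>R p + t *\<^sub>R r))\<^sup>2 + s * t * (norm (p - r))\<^sup>2 = s * (norm p)\<^sup>2 + t * (norm r)\<^sup>2"
  proof -
    have t: "t = 1 - s" using assms(3) by simp
    show ?thesis unfolding t power2_norm_eq_inner
      by (simp add: inner_add_left inner_add_right inner_diff_left inner_diff_right inner_commute algebra_simps)
  qed
  have "0 \<le> s * t * (norm (p - r))\<^sup>2" using assms by simp
  with e show ?thesis by linarith
qed


lemma step_alg:
  fixes y x yt xn xt u :: "'a::real_inner"
  assumes A: "A \<ge> 0" and a: "a > 0" and Ap: "Ap = A + a" and L: "L > 0" and mu: "\<mu> > 0"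
    and La: "L * a\<^sup>2 = (1 + \<mu> * A) * Ap"
    and xt: "xt = (A / Ap) *\<^sub>R y + (a / Ap) *\<^sub>R x"
    and xn: "xn = (1 / (Ap * \<mu> + 1)) *\<^sub>R (((L + \<mu>) * a) *\<^sub>R yt - (A * a * L / Ap) *\<^sub>R y)"
    and gm: "\<And>u. gm u = c0 + L * ((xt - yt) \<bullet> (u - yt)) + \<mu> / 2 * (norm (u - yt))\<^sup>2"
  shows "Ap * (c0 + L / 2 * (norm (yt - xt))\<^sup>2) + (1 + \<mu> * Ap) / 2 * (norm (u - xn))\<^sup>2
         \<le> A * gm y + (1 + \<mu> * A) / 2 * (norm (u - x))\<^sup>2 + a * gm u"
proof -
  have Ap0: "Ap > 0" using A a Ap by simp
  define q where "q = (\<lambda>u. A * gm y + (1 + \<mu> * A) / 2 * (norm (u - x))\<^sup>2 + a * gm u)"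
  \<comment> \<open>stationarity\<close>
  have c1: "(1 + \<mu> * Ap) *\<^sub>R xn = ((L + \<mu>) * a) *\<^sub>R yt - (A * a * L / Ap) *\<^sub>R y"
  proof -
    have "Ap * \<mu> > 0" using Ap0 mu by simp
    then have "(1 + \<mu> * Ap) * (1 / (Ap * \<mu> + 1)) = 1"
      by (simp add: field_simps mult.commute)
    then have c: "(1 + \<mu> * Ap) * (1 / (Ap * \<mu> + 1)) = 1" .
    have "(1 + \<mu> * Ap) *\<^sub>R xn = ((1 + \<mu> * Ap) * (1 / (Ap * \<mu> + 1))) *\<^sub>R (((L + \<mu>) * a) *\<^sub>R yt - (A * a * L / Ap) *\<^sub>R y)"
      by (simp only: xn scaleR_scaleR)
    then show ?thesis by (simp only: c scaleR_one)
  qed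
  have aLa: "a * L * (a / Ap) = 1 + \<mu> * A" using La Ap0 by (simp add: field_simps power2_eq_square)
  have c2: "(a * L) *\<^sub>R xt = (A * a * L / Ap) *\<^sub>R y + (1 + \<mu> * A) *\<^sub>R x"
    unfolding xt by (simp add: scaleR_add_right aLa[symmetric])
  have V: "(1 + \<mu> * A) *\<^sub>R (xn - x) + (a * L) *\<^sub>R (xt - yt) + (a * \<mu>) *\<^sub>R (xn - yt) = 0"
  proof -
    have "(1 + \<mu> * A) *\<^sub>R (xn - x) + (a * L) *\<^sub>R (xt - yt) + (a * \<mu>) *\<^sub>R (xn - yt)
        = (1 + \<mu> * Ap) *\<^sub>R xn - (1 + \<mu> * A) *\<^sub>R x + (a * L) *\<^sub>R xt - (a * (L + \<mu>)) *\<^sub>R yt"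
      unfolding Ap by (simp add: algebra_simps)
    also have "\<dots> = 0" unfolding c1 c2 by (simp add: algebra_simps)
    finally show ?thesis .
  qed
  have Q: "q u = q xn + (1 + \<mu> * Ap) / 2 * (norm (u - xn))\<^sup>2"
  proof -
    define d where "d = u - xn"
    have u: "u = xn + d" unfolding d_def by simp
    have Vd: "(1 + \<mu> * A) * ((xn - x) \<bullet> d) + (a * L) * ((xt - yt) \<bullet> d) + (a * \<mu>) * ((xn - yt) \<bullet> d) = 0"
      using arg_cong[OF V, of "\<lambda>v. v \<bullet> d"] by (simp add: inner_add_left)
    have e1: "u - x = (xn - x) + d" "u - yt = (xn - yt) + d" unfolding u by auto
    have "q u = A * gm y + (1 + \<mu> * A) / 2 * ((norm (xn - x))\<^sup>2 + 2 * ((xn - x) \<bullet> d) + (norm d)\<^sup>2)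
       + a * (c0 + L * ((xt - yt) \<bullet> (xn - yt)) + L * ((xt - yt) \<bullet> d)
           + \<mu> / 2 * ((norm (xn - yt))\<^sup>2 + 2 * ((xn - yt) \<bullet> d) + (norm d)\<^sup>2))"
      unfolding q_def gm e1 nsq by (simp add: inner_add_right distrib_left)
    also have "\<dots> = q xn + (1 + \<mu> * Ap) / 2 * (norm d)\<^sup>2"
      using Vd unfolding q_def gm Ap by (simp add: algebra_simps add_divide_distrib)
    finally show ?thesis unfolding d_def .
  qed
  define v where "v = xn"
  define vt where "vt = (A / Ap) *\<^sub>R y + (a / Ap) *\<^sub>R v"
  have s1: "A / Ap + a / Ap = 1" using Ap0 Ap by (simp add: add_divide_distrib[symmetric])
  have vty: "vt - yt = (A / Ap) *\<^sub>R (y - yt) + (a / Ap) *\<^sub>R (v - yt)"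
  proof -
    have "yt = (A / Ap) *\<^sub>R yt + (a / Ap) *\<^sub>R yt" using s1 by (metis scaleR_add_left scaleR_one)
    then show ?thesis unfolding vt_def by (simp add: algebra_simps)
  qed
  have J1: "(norm (vt - yt))\<^sup>2 \<le> (A / Ap) * (norm (y - yt))\<^sup>2 + (a / Ap) * (norm (v - yt))\<^sup>2"
    unfolding vty by (rule sq_convex) (use A a Ap0 s1 in auto)
  have J2: "(xt - yt) \<bullet> (vt - yt) = (A / Ap) * ((xt - yt) \<bullet> (y - yt)) + (a / Ap) * ((xt - yt) \<bullet> (v - yt))"
    unfolding vty by (simp add: inner_add_right)
  have J: "Ap * gm vt \<le> A * gm y + a * gm v"
  proof -
    have "Ap * gm vt = Ap * c0 + L * (A * ((xt - yt) \<bullet> (y - yt)) + a * ((xt - yt) \<bullet> (v - yt)))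
            + \<mu> / 2 * (Ap * (norm (vt - yt))\<^sup>2)"
      unfolding gm J2 using Ap0 by (simp add: field_simps)
    also have "\<dots> \<le> Ap * c0 + L * (A * ((xt - yt) \<bullet> (y - yt)) + a * ((xt - yt) \<bullet> (v - yt)))
            + \<mu> / 2 * (A * (norm (y - yt))\<^sup>2 + a * (norm (v - yt))\<^sup>2)"
    proof -
      have "Ap * (norm (vt - yt))\<^sup>2 \<le> Ap * ((A / Ap) * (norm (y - yt))\<^sup>2 + (a / Ap) * (norm (v - yt))\<^sup>2)"
        using J1 Ap0 by (simp add: mult_left_mono)
      also have "\<dots> = A * (norm (y - yt))\<^sup>2 + a * (norm (v - yt))\<^sup>2" using Ap0 by (simp add: field_simps)
      finally show ?thesis using mu by simp
    qed
    also have "\<dots> = A * gm y + a * gm v" unfolding gm Ap by (simp add: algebra_simps)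
    finally show ?thesis .
  qed
  have vtx: "vt - xt = (a / Ap) *\<^sub>R (v - x)" unfolding vt_def xt by (simp add: algebra_simps)
  have Qd: "(1 + \<mu> * A) / 2 * (norm (v - x))\<^sup>2 = Ap * (L / 2 * (norm (vt - xt))\<^sup>2)"
  proof -
    have "Ap * (L / 2 * (norm (vt - xt))\<^sup>2) = (L * a\<^sup>2) / Ap / 2 * (norm (v - x))\<^sup>2"
      unfolding vtx nsq_scale using Ap0 by (simp add: field_simps power2_eq_square)
    also have "\<dots> = (1 + \<mu> * A) / 2 * (norm (v - x))\<^sup>2" unfolding La using Ap0 by simp
    finally show ?thesis by simp
  qed
  have M: "c0 + L / 2 * (norm (yt - xt))\<^sup>2 \<le> gm vt + L / 2 * (norm (vt - xt))\<^sup>2"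
  proof -
    have e: "vt - xt = (vt - yt) + (yt - xt)" by simp
    have "gm vt + L / 2 * (norm (vt - xt))\<^sup>2 = c0 + (L + \<mu>) / 2 * (norm (vt - yt))\<^sup>2 + L / 2 * (norm (yt - xt))\<^sup>2"
      unfolding gm e nsq
      by (simp add: algebra_simps inner_diff_left inner_diff_right add_divide_distrib)
         (metis inner_commute add.commute add.left_commute)
    moreover have "0 \<le> (L + \<mu>) / 2 * (norm (vt - yt))\<^sup>2" using L mu by simp
    ultimately show ?thesis by linarith
  qed
  have "Ap * (c0 + L / 2 * (norm (yt - xt))\<^sup>2) \<le> Ap * (gm vt + L / 2 * (norm (vt - xt))\<^sup>2)"
    using M Ap0 by simp
  also have "\<dots> = Ap * gm vt + Ap * (L / 2 * (norm (vt - xt))\<^sup>2)" by (simp add: distrib_left)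
  also have "\<dots> \<le> q xn" using J Qd unfolding q_def v_def[symmetric] by linarith
  finally show ?thesis using Q unfolding q_def by simp
qed


lemma half_pos: "0 \<le> (s::real) \<Longrightarrow> 0 < t \<Longrightarrow> 0 < (t + s) / 2" by simp

theorem lemma2p3:
  fixes \<mu> L :: real
    and g :: "'a::euclidean_space \<Rightarrow> real" and G :: "'a \<Rightarrow> 'a"
    and h \<psi> :: "'a \<Rightarrow> ereal"
    and A \<tau> a :: "nat \<Rightarrow> real"
    and x y xt yt :: "nat \<Rightarrow> 'a"
    and \<gamma> \<Gamma> :: "nat \<Rightarrow> 'a \<Rightarrow> ereal"
    and x0 :: 'a
  assumes mu_pos: "\<mu> > 0" and L_pos: "L > 0"
    and g_sc: "strongly_convex \<mu> g"
    and g_smooth: "smooth_with_grad (L + \<mu>) g G"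
    and h_pcc: "proper_closed_convex h"
    and psi_def: "\<And>u. \<psi> u = ereal (g u) + h u"
    and A0: "A 0 = 0" and tau0: "\<tau> 0 = 1 / L" and y0: "y 0 = x0" and x0_def: "x 0 = x0"
    and a_def: "\<And>j. a j = (\<tau> j + sqrt ((\<tau> j)\<^sup>2 + 4 * \<tau> j * A j)) / 2"
    and tau_rec: "\<And>j. \<tau> (Suc j) = \<tau> j + \<mu> * a j / L"
    and A_rec: "\<And>j. A (Suc j) = A j + a j"
    and xt_def: "\<And>j. xt j = (A j / A (Suc j)) *\<^sub>R y j + (a j / A (Suc j)) *\<^sub>R x j"
    and yt_min: "\<And>j u. ereal (lin g G (yt (Suc j)) (xt j)) + h (yt (Suc j))
                          + ereal ((L + \<mu>) / 2 * (norm (yt (Suc j) - xt j))\<^sup>2)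
                        \<le> ereal (lin g G u (xt j)) + h u + ereal ((L + \<mu>) / 2 * (norm (u - xt j))\<^sup>2)"
    and y_rec: "\<And>j. y (Suc j) \<in> {y j, yt (Suc j)}
                   \<and> \<psi> (y (Suc j)) \<le> \<psi> (y j) \<and> \<psi> (y (Suc j)) \<le> \<psi> (yt (Suc j))"
    and x_rec: "\<And>j. x (Suc j) = (1 / (A (Suc j) * \<mu> + 1)) *\<^sub>R
                   (((L + \<mu>) * a j) *\<^sub>R yt (Suc j) - (A j * a j * L / A (Suc j)) *\<^sub>R y j)"
    and gamma_def: "\<And>j u. \<gamma> j u =
                   ereal (lin g G (yt (Suc j)) (xt j)) + h (yt (Suc j))
                     + ereal (\<mu> / 2 * (norm (yt (Suc j) - xt j))\<^sup>2)
                     + ereal (L * ((xt j - yt (Suc j)) \<bullet> (u - yt (Suc j)))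
                              + \<mu> / 2 * (norm (u - yt (Suc j)))\<^sup>2)"
    and Gamma0: "\<And>u. \<Gamma> 0 u = 0"
    and Gamma_rec: "\<And>j u. \<Gamma> (Suc j) u =
                   (ereal (A j) * \<Gamma> j u + ereal (a j) * \<gamma> j u) / ereal (A (Suc j))"
  shows "\<forall>j. ereal (A j) * \<psi> (y j)
             \<le> (INF u. ereal (A j) * \<Gamma> j u + ereal ((norm (u - x0))\<^sup>2 / 2))"
proof -
  have dg: "\<forall>x. (g has_derivative (\<lambda>v. G x \<bullet> v)) (at x)"
    using g_smooth unfolding smooth_with_grad_def by blast
  have TA: "\<tau> j = (1 + \<mu> * A j) / L \<and> A j \<ge> 0" for j
  proof (induction j)
    case 0 then show ?case using A0 tau0 by simp
  next
    case (Suc j)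
    have tp: "\<tau> j > 0" using Suc L_pos mu_pos by (simp add: add_pos_nonneg)
    have nn: "0 \<le> (\<tau> j)\<^sup>2 + 4 * \<tau> j * A j" using tp Suc by (intro add_nonneg_nonneg mult_nonneg_nonneg) auto
    have "a j > 0" unfolding a_def[of j] by (rule half_pos[OF real_sqrt_ge_zero[OF nn] tp])
    then show ?case using Suc tau_rec[of j] A_rec[of j] L_pos
      by (simp add: field_simps)
  qed
  have Anneg: "A j \<ge> 0" for j using TA by blast
  have tpos: "\<tau> j > 0" for j using TA[of j] Anneg[of j] L_pos mu_pos by (simp add: add_pos_nonneg)
  have apos: "a j > 0" for j
  proof -
    have nn: "0 \<le> (\<tau> j)\<^sup>2 + 4 * \<tau> j * A j" using tpos[of j] Anneg[of j] by (intro add_nonneg_nonneg mult_nonneg_nonneg) auto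
    show ?thesis unfolding a_def[of j] by (rule half_pos[OF real_sqrt_ge_zero[OF nn] tpos[of j]])
  qed
  have Apos: "A (Suc j) > 0" for j using Anneg[of j] apos[of j] A_rec[of j] by simp
  have La: "L * (a j)\<^sup>2 = (1 + \<mu> * A j) * A (Suc j)" for j
  proof -
    define s where "s = sqrt ((\<tau> j)\<^sup>2 + 4 * \<tau> j * A j)"
    have s2: "s\<^sup>2 = (\<tau> j)\<^sup>2 + 4 * \<tau> j * A j" unfolding s_def
      using tpos[of j] Anneg[of j] by (simp add: add_nonneg_nonneg mult_nonneg_nonneg)
    have aj: "a j = (\<tau> j + s) / 2" unfolding s_def a_def[of j] ..
    have "(a j)\<^sup>2 = \<tau> j * (a j + A j)" unfolding aj using s2
      by (simp add: power2_eq_square field_simps)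
    then have "L * (a j)\<^sup>2 = (L * \<tau> j) * A (Suc j)" using A_rec[of j] by simp
    also have "L * \<tau> j = 1 + \<mu> * A j" using TA[of j] L_pos by simp
    finally show ?thesis .
  qed
  have hfin: "\<exists>hy. h (yt (Suc j)) = ereal hy" for j
    by (rule h_fin[OF h_pcc yt_min])
  define hy where "hy j = real_of_ereal (h (yt (Suc j)))" for j
  have hyE: "h (yt (Suc j)) = ereal (hy j)" for j using hfin[of j] unfolding hy_def by auto
  define c0 where "c0 j = lin g G (yt (Suc j)) (xt j) + hy j + \<mu> / 2 * (norm (yt (Suc j) - xt j))\<^sup>2" for j
  define gr where "gr j u = c0 j + L * ((xt j - yt (Suc j)) \<bullet> (u - yt (Suc j))) + \<mu> / 2 * (norm (u - yt (Suc j)))\<^sup>2" for j u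
  have gamE: "\<gamma> j u = ereal (gr j u)" for j u
    unfolding gamma_def gr_def c0_def hyE by simp
  have below: "ereal (gr j u) \<le> \<psi> u" for j u
    unfolding psi_def gr_def c0_def
    by (rule model_below[OF g_sc dg h_pcc mu_pos L_pos yt_min hyE])
  have upper: "\<psi> (yt (Suc j)) \<le> ereal (c0 j + L / 2 * (norm (yt (Suc j) - xt j))\<^sup>2)" for j
  proof -
    have "g (yt (Suc j)) \<le> g (xt j) + G (xt j) \<bullet> (yt (Suc j) - xt j) + (L + \<mu>) / 2 * (norm (yt (Suc j) - xt j))\<^sup>2"
      by (rule descent[OF g_smooth]) (use L_pos mu_pos in simp)
    then show ?thesis unfolding psi_def hyE c0_def lin_def by (simp add: field_simps)
  qed
  have psifin: "\<exists>p. \<psi> (y (Suc j)) = ereal p" for j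
  proof -
    have "\<psi> (y (Suc j)) \<le> ereal (c0 j + L / 2 * (norm (yt (Suc j) - xt j))\<^sup>2)"
      using y_rec[of j] upper[of j] by (meson order_trans)
    moreover have "ereal (gr j (y (Suc j))) \<le> \<psi> (y (Suc j))" by (rule below)
    ultimately show ?thesis by (cases "\<psi> (y (Suc j))") auto
  qed
  define Gr where "Gr j u = real_of_ereal (\<Gamma> j u)" for j u
  have GrE: "\<Gamma> j u = ereal (Gr j u)" for j u
  proof (induction j)
    case 0 then show ?case using Gamma0 unfolding Gr_def by (simp add: zero_ereal_def)
  next
    case (Suc j)
    have "\<Gamma> (Suc j) u = ereal ((A j * Gr j u + a j * gr j u) / A (Suc j))"
      unfolding Gamma_rec Suc gamE using Apos[of j] by simp
    then show ?case unfolding Gr_def by simp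
  qed
  have GrS: "A (Suc j) * Gr (Suc j) u = A j * Gr j u + a j * gr j u" for j u
  proof -
    have "\<Gamma> (Suc j) u = ereal ((A j * Gr j u + a j * gr j u) / A (Suc j))"
      unfolding Gamma_rec GrE[of j] gamE using Apos[of j] by simp
    then have "Gr (Suc j) u = (A j * Gr j u + a j * gr j u) / A (Suc j)" unfolding Gr_def by simp
    then show ?thesis using Apos[of j] by simp
  qed
  have C: "ereal (A j) * \<psi> (y j) + ereal ((1 + \<mu> * A j) / 2 * (norm (u - x j))\<^sup>2)
            \<le> ereal (A j * Gr j u + (norm (u - x0))\<^sup>2 / 2)" for j u
  proof (induction j arbitrary: u)
    case 0 then show ?case using A0 x0_def GrE[of 0 u] Gamma0[of u] by (simp add: zero_ereal_def[symmetric])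
  next
    case (Suc j)
    have IH: "ereal (A j) * \<psi> (y j) + ereal ((1 + \<mu> * A j) / 2 * (norm (u - x j))\<^sup>2)
            \<le> ereal (A j * Gr j u + (norm (u - x0))\<^sup>2 / 2)" by (rule Suc)
    have "ereal (A j) * ereal (gr j (y j)) \<le> ereal (A j) * \<psi> (y j)"
      by (rule ereal_mult_left_mono[OF below]) (use Anneg in simp)
    then have "ereal (A j * gr j (y j)) + ereal ((1 + \<mu> * A j) / 2 * (norm (u - x j))\<^sup>2)
        \<le> ereal (A j * Gr j u + (norm (u - x0))\<^sup>2 / 2)"
      using IH by (metis add_right_mono order_trans times_ereal.simps(1))
    then have R1: "A j * gr j (y j) + (1 + \<mu> * A j) / 2 * (norm (u - x j))\<^sup>2
        \<le> A j * Gr j u + (norm (u - x0))\<^sup>2 / 2" by simp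
    have S: "A (Suc j) * (c0 j + L / 2 * (norm (yt (Suc j) - xt j))\<^sup>2) + (1 + \<mu> * A (Suc j)) / 2 * (norm (u - x (Suc j)))\<^sup>2
         \<le> A j * gr j (y j) + (1 + \<mu> * A j) / 2 * (norm (u - x j))\<^sup>2 + a j * gr j u"
      by (rule step_alg[OF Anneg apos A_rec L_pos mu_pos La xt_def x_rec]) (simp add: gr_def)
    obtain p where p: "\<psi> (y (Suc j)) = ereal p" using psifin by blast
    have "ereal p \<le> ereal (c0 j + L / 2 * (norm (yt (Suc j) - xt j))\<^sup>2)"
      using order_trans[OF conjunct2[OF conjunct2[OF y_rec[of j]]] upper[of j]] unfolding p .
    then have "A (Suc j) * p \<le> A (Suc j) * (c0 j + L / 2 * (norm (yt (Suc j) - xt j))\<^sup>2)"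
      using Apos[of j] by simp
    then have "A (Suc j) * p + (1 + \<mu> * A (Suc j)) / 2 * (norm (u - x (Suc j)))\<^sup>2
        \<le> A (Suc j) * Gr (Suc j) u + (norm (u - x0))\<^sup>2 / 2"
      using S R1 GrS[of j u] by linarith
    then show ?case using p by simp
  qed
  show ?thesis
  proof
    fix j
    show "ereal (A j) * \<psi> (y j) \<le> (INF u. ereal (A j) * \<Gamma> j u + ereal ((norm (u - x0))\<^sup>2 / 2))"
    proof (rule INF_greatest)
      fix u
      have "ereal (A j) * \<psi> (y j) \<le> ereal (A j) * \<psi> (y j) + ereal ((1 + \<mu> * A j) / 2 * (norm (u - x j))\<^sup>2)"
      proof -
        have "0 \<le> (1 + \<mu> * A j) / 2 * (norm (u - x j))\<^sup>2"
          using Anneg[of j] mu_pos by (simp add: add_nonneg_nonneg)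
        then show ?thesis by (cases "ereal (A j) * \<psi> (y j)") auto
      qed
      also have "\<dots> \<le> ereal (A j * Gr j u + (norm (u - x0))\<^sup>2 / 2)" by (rule C)
      also have "\<dots> = ereal (A j) * \<Gamma> j u + ereal ((norm (u - x0))\<^sup>2 / 2)" unfolding GrE by simp
      finally show "ereal (A j) * \<psi> (y j) \<le> ereal (A j) * \<Gamma> j u + ereal ((norm (u - x0))\<^sup>2 / 2)" .
    qed
  qed
qed

end
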